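(* Let $\lambda>0$ and $1\le\nu<2$. The solution $u_\nu$ of $\frac{\partial^{\nu}u}{\partial t^{\nu}}=\lambda^2\frac{\partial^2u}{\partial x^2}$, $x\in\mathbb{R}$, $t>0$, with $u(x,0)=\delta(x)$, $u_t(x,0)=0$, satisfies \[ u_\nu(x,t)=\frac2\nu\,\frac{1}{2\lambda t^{\nu/2}}\,p_{2/\nu}\!\left(\frac{|x|}{\lambda t^{\nu/2}};\frac2\nu(\nu-1),1\right)=\frac1\nu\,p_{2/\nu}\!\left(|x|;\frac2\nu(\nu-1),\lambda^{2/\nu}t\right). \]
   Context: Fractional derivative in the Dzherbashyan–Caputo sense: for $1<\nu<2$, $\frac{\partial^{\nu}u}{\partial t^{\nu}}(x,t)=\frac{1}{\Gamma(2-\nu)}\int_0^t (t-s)^{1-\nu}\frac{\partial^2 u}{\partial s^2}(x,s)\,ds$; for $\nu=1$ the ordinary first derivative (the condition $u_t(x,0)=0$ being then the one stated). The solution is $u_\nu(x,t)=\frac{1}{2\lambda t^{\nu/2}}\sum_{k\ge0}\frac{(-|x|/(\lambda t^{\nu/2}))^k}{k!\,\Gamma(-\nu k/2+1-\nu/2)}$. For $\alpha\neq1$, the stable density is $p_\alpha(x;\gamma,\eta)=\frac{1}{2\pi}\int_{-\infty}^{+\infty}e^{-i\beta x}\exp\{-\eta|\beta|^\alpha e^{-i\frac{\pi\gamma}{2}\frac{\beta}{|\beta|}}\}\,d\beta$. *)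

theory Defs
  imports "HOL-Analysis.Analysis"
begin

text \<open>The explicit solution of the time-fractional equation, given as the series in the paper.
  Reciprocal Gamma (rGamma) is used for 1/Gamma, which vanishes at the poles of Gamma.\<close>
definition u_sol :: "real \<Rightarrow> real \<Rightarrow> real \<Rightarrow> real \<Rightarrow> real" where
  "u_sol lam \<nu> x t =
     1 / (2 * lam * t powr (\<nu>/2)) *
     (\<Sum>k. (- (\<bar>x\<bar> / (lam * t powr (\<nu>/2)))) ^ k / fact k
            * rGamma (- \<nu> * real k / 2 + 1 - \<nu>/2))"

definition stable_density :: "real \<Rightarrow> real \<Rightarrow> real \<Rightarrow> real \<Rightarrow> complex" where
  "stable_density \<alpha> x \<gamma> \<eta> =
     1 / (2 * of_real pi) *
     integral UNIV (\<lambda>\<beta>::real.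
        exp (- \<i> * of_real (\<beta> * x)) *
        exp (- of_real (\<eta> * \<bar>\<beta>\<bar> powr \<alpha>)
             * exp (- \<i> * of_real (pi * \<gamma> / 2 * sgn \<beta>))))"

end

theory Submission
  imports Defs
begin


lemma has_integral_0_open:
  fixes f :: "real \<Rightarrow> 'a::banach"
  assumes "(f has_integral I) {0..}" shows "(f has_integral I) {0<..}"
proof -
  have "negligible {x \<in> {0..} - {0<..}. f x \<noteq> 0}"
    by (rule negligible_subset[of "{0}"]) auto
  moreover have "negligible {x \<in> {0<..} - {0..}. f x \<noteq> (0::'a)}"
    by (rule negligible_subset[of "{}"]) auto
  ultimately show ?thesis using has_integral_spike_set_eq assms by blast
qed

lemma real_moment:
  fixes \<alpha> a p :: real
  assumes "\<alpha> > 0" "a > 0" "p > -1"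
  shows "((\<lambda>\<beta>. \<beta> powr p * exp (-(a * \<beta> powr \<alpha>))) has_integral
           (Gamma ((p+1)/\<alpha>) / (\<alpha> * a powr ((p+1)/\<alpha>)))) {0<..}"
proof -
  define x where "x = (p+1)/\<alpha>"
  have x: "x > 0" using assms by (simp add: x_def)
  define f where "f = (\<lambda>t::real. t powr (x - 1) / exp t)"
  have "(f has_integral Gamma x) {0..}" unfolding f_def by (rule Gamma_integral_real[OF x])
  hence fi: "(f has_integral Gamma x) {0<..}"
    by (rule has_integral_0_open)
  hence fa: "f absolutely_integrable_on {0<..}"
    by (intro nonnegative_absolutely_integrable_1) (auto simp: f_def has_integral_integrable)
  define g where "g = (\<lambda>\<beta>::real. a * \<beta> powr \<alpha>)"
  define g' where "g' = (\<lambda>\<beta>::real. a * (\<alpha> * \<beta> powr (\<alpha> - 1)))"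
  have der: "(g has_field_derivative g' \<beta>) (at \<beta> within {0<..})" if "\<beta> \<in> {0<..}" for \<beta>
    unfolding g_def g'_def using that
    by (auto intro!: derivative_eq_intros)
  have inj: "inj_on g {0<..}"
  proof (rule inj_onI)
    fix u v :: real assume uv: "u \<in> {0<..}" "v \<in> {0<..}" "g u = g v"
    hence "u powr \<alpha> = v powr \<alpha>" using assms by (simp add: g_def)
    hence "(u powr \<alpha>) powr (1/\<alpha>) = (v powr \<alpha>) powr (1/\<alpha>)" by simp
    thus "u = v" using uv assms by (simp add: powr_powr)
  qed
  have img: "g ` {0<..} = {0<..}"
  proof
    show "g ` {0<..} \<subseteq> {0<..}" using assms by (auto simp: g_def)
    show "{0<..} \<subseteq> g ` {0<..}"
    proof
      fix t :: real assume t: "t \<in> {0<..}"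
      have "g ((t/a) powr (1/\<alpha>)) = t" using assms t
        by (simp add: g_def powr_powr)
      moreover have "(t/a) powr (1/\<alpha>) \<in> {0<..}" using assms t by simp
      ultimately show "t \<in> g ` {0<..}" by (metis image_eqI)
    qed
  qed
  have "(\<lambda>\<beta>. \<bar>g' \<beta>\<bar> * f (g \<beta>)) absolutely_integrable_on {0<..} \<and>
           integral {0<..} (\<lambda>\<beta>. \<bar>g' \<beta>\<bar> * f (g \<beta>)) = Gamma x"
    using has_absolute_integral_change_of_variables_1'[of "{0<..}" g g' f "Gamma x", OF _ der inj]
    using fa fi img by (simp add: integral_unique)
  hence h1: "((\<lambda>\<beta>. \<bar>g' \<beta>\<bar> * f (g \<beta>)) has_integral Gamma x) {0<..}"
    by (metis has_integral_integral set_lebesgue_integral_eq_integral(1))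
  have eq: "\<bar>g' \<beta>\<bar> * f (g \<beta>) = (\<alpha> * a powr x) * (\<beta> powr p * exp (-(a * \<beta> powr \<alpha>)))"
    if "\<beta> \<in> {0<..}" for \<beta>
  proof -
    have b: "\<beta> > 0" using that by simp
    have "\<bar>g' \<beta>\<bar> = a * \<alpha> * \<beta> powr (\<alpha> - 1)" using assms b by (simp add: g'_def)
    moreover have "(a * \<beta> powr \<alpha>) powr (x - 1) = a powr (x - 1) * \<beta> powr (\<alpha> * (x - 1))"
      using assms b by (simp add: powr_mult powr_powr)
    ultimately have "\<bar>g' \<beta>\<bar> * f (g \<beta>) = (a * a powr (x - 1)) * \<alpha> * (\<beta> powr (\<alpha> - 1) * \<beta> powr (\<alpha> * (x - 1))) / exp (a * \<beta> powr \<alpha>)"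
      by (simp add: f_def g_def)
    also have "a * a powr (x - 1) = a powr x" using assms by (simp add: powr_diff)
    also have "\<beta> powr (\<alpha> - 1) * \<beta> powr (\<alpha> * (x - 1)) = \<beta> powr p"
    proof -
      have "(\<alpha> - 1) + \<alpha> * (x - 1) = p" using assms by (simp add: x_def field_simps)
      thus ?thesis by (simp add: powr_add[symmetric])
    qed
    finally show ?thesis by (simp add: exp_minus field_simps)
  qed
  have "((\<lambda>\<beta>. (\<alpha> * a powr x) * (\<beta> powr p * exp (-(a * \<beta> powr \<alpha>)))) has_integral Gamma x) {0<..}"
    using has_integral_spike_eq[of "{}" "{0<..}"] h1 eq by (smt (verit) has_integral_eq)
  hence "((\<lambda>\<beta>. (1/(\<alpha> * a powr x)) * ((\<alpha> * a powr x) * (\<beta> powr p * exp (-(a * \<beta> powr \<alpha>))))) has_integral (1/(\<alpha> * a powr x)) * Gamma x) {0<..}"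
    by (rule has_integral_mult_right)
  thus ?thesis using assms by (simp add: x_def)
qed



lemma exp_partial_le:
  fixes x :: real assumes "x \<ge> 0"
  shows "(\<Sum>m<N. x^m / fact m) \<le> exp x"
proof -
  have "(\<lambda>n. x^n / fact n) sums exp x" using exp_converges[of x] by (simp add: divide_inverse_commute)
  hence "(\<Sum>m<N. x^m / fact m) \<le> (\<Sum>m. x^m / fact m)"
    using assms by (intro sum_le_suminf) (auto simp: sums_iff)
  thus ?thesis using \<open>(\<lambda>n. x^n / fact n) sums exp x\<close> by (simp add: sums_iff)
qed

lemma powr_complex_div_real:
  fixes c :: complex and a :: real and w :: complex
  assumes "a > 0" "c \<noteq> 0"
  shows "(c / of_real a) powr w = c powr w * exp (- w * of_real (ln a))"
proof -
  have "c / of_real a = of_real (1/a) * c" by simp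
  hence "Ln (c / of_real a) = Ln (of_real (1/a)) + Ln c"
    using Ln_times_of_real[of "1/a" c] assms by simp
  also have "Ln (of_real (1/a)) = of_real (ln (1/a))" using assms
    by (intro Ln_of_real) simp
  also have "ln (1/a) = - ln a" using assms by (simp add: ln_div)
  finally have L: "Ln (c / of_real a) = Ln c - of_real (ln a)" by simp
  have "c / of_real a \<noteq> 0" using assms by simp
  hence "(c / of_real a) powr w = exp (w * (Ln c - of_real (ln a)))" by (simp add: powr_def L)
  also have "\<dots> = exp (w * Ln c) * exp (- w * of_real (ln a))"
    by (simp add: algebra_simps flip: exp_add)
  also have "exp (w * Ln c) = c powr w" using assms by (simp add: powr_def)
  finally show ?thesis .
qed



lemma complex_moment:
  fixes \<alpha> p :: real and c :: complex
  assumes "\<alpha> > 0" "p > -1" "Re c > 0"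
  shows "((\<lambda>\<beta>. of_real (\<beta> powr p) * exp (- (c * of_real (\<beta> powr \<alpha>)))) has_integral
          (of_real (Gamma ((p+1)/\<alpha>) / \<alpha>) * c powr (- of_real ((p+1)/\<alpha>)))) {0<..}"
proof -
  define s where "s = (p+1)/\<alpha>"
  have s: "s > 0" using assms by (simp add: s_def)
  have c0: "c \<noteq> 0" using assms by auto
  have cm: "cmod c > 0" using c0 by simp
  define a where "a = (cmod c)^2 / Re c"
  have a: "a > 0" using assms cm by (simp add: a_def)
  have aRe: "a * Re c = (cmod c)^2" using assms by (simp add: a_def)
  define d where "d = c - of_real a"
  define r where "r = cmod d"
  have r0: "r \<ge> 0" by (simp add: r_def)
  have "r^2 = (Re c - a)^2 + (Im c)^2" by (simp add: r_def d_def cmod_power2)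
  also have "\<dots> = (Re c ^2 + Im c^2) - 2 * (a * Re c) + a^2" by (simp add: power2_eq_square algebra_simps)
  also have "\<dots> = a^2 - (cmod c)^2" using aRe by (simp add: cmod_power2)
  finally have "r^2 < a^2" using cm by simp
  hence r: "r < a" using a r0 by (simp add: power_less_imp_less_base)
  define F where "F = (\<lambda>m \<beta>. of_real (\<beta> powr (p + \<alpha> * real m) * exp (-(a * \<beta> powr \<alpha>))) * ((-d)^m /\<^sub>R fact m))"
  define T where "T = (\<lambda>m. of_real (Gamma (s + real m) / (\<alpha> * a powr (s + real m))) * ((-d)^m /\<^sub>R fact m))"
  have FT: "(F m has_integral T m) {0<..}" for m
  proof -
    have e: "(p + \<alpha> * real m + 1) / \<alpha> = s + real m" using assms by (simp add: s_def field_simps)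
    have "((\<lambda>\<beta>. \<beta> powr (p + \<alpha> * real m) * exp (-(a * \<beta> powr \<alpha>))) has_integral
           (Gamma (s + real m) / (\<alpha> * a powr (s + real m)))) {0<..}"
    proof -
      have "p + \<alpha> * real m > -1" using assms by (smt (verit) mult_nonneg_nonneg of_nat_0_le_iff)
      thus ?thesis using real_moment[of \<alpha> a "p + \<alpha> * real m"] assms a e by simp
    qed
    from has_integral_mult_left[OF has_integral_of_real[OF this]]
    show ?thesis unfolding F_def T_def .
  qed
  define f where "f = (\<lambda>N \<beta>. \<Sum>m<N. F m \<beta>)"
  have fN: "(f N has_integral (\<Sum>m<N. T m)) {0<..}" for N
    unfolding f_def by (intro has_integral_sum) (auto simp: FT)
  define h where "h = (\<lambda>\<beta>::real. \<beta> powr p * exp (-((a - r) * \<beta> powr \<alpha>)))"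
  have hi: "h integrable_on {0<..}"
    using real_moment[of \<alpha> "a - r" p] assms r unfolding h_def by (auto simp: has_integral_integrable)
  define g where "g = (\<lambda>\<beta>. of_real (\<beta> powr p) * exp (- (c * of_real (\<beta> powr \<alpha>))))"
  have le: "norm (f N \<beta>) \<le> h \<beta>" if "\<beta> \<in> {0<..}" for N \<beta>
  proof -
    have b: "\<beta> > 0" using that by simp
    define B where "B = \<beta> powr \<alpha>"
    have B: "B \<ge> 0" by (simp add: B_def)
    have nF: "norm (F m \<beta>) = \<beta> powr p * exp (-(a * B)) * ((r * B)^m / fact m)" for m
    proof -
      have "\<beta> powr (p + \<alpha> * real m) = \<beta> powr p * B^m"
        using b by (simp add: B_def powr_add powr_power mult.commute)
      thus ?thesis by (simp add: F_def norm_mult r_def norm_power B_def power_mult_distrib field_simps)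
    qed
    have "norm (f N \<beta>) \<le> (\<Sum>m<N. norm (F m \<beta>))" unfolding f_def by (rule norm_sum)
    also have "\<dots> = \<beta> powr p * exp (-(a * B)) * (\<Sum>m<N. (r * B)^m / fact m)"
      by (simp add: nF sum_distrib_left)
    also have "\<dots> \<le> \<beta> powr p * exp (-(a * B)) * exp (r * B)"
      using exp_partial_le[of "r * B" N] r0 B by (intro mult_left_mono) auto
    also have "\<dots> = h \<beta>" by (simp add: h_def B_def algebra_simps flip: exp_add)
    finally show ?thesis .
  qed
  have conv: "(\<lambda>N. f N \<beta>) \<longlonglongrightarrow> g \<beta>" if "\<beta> \<in> {0<..}" for \<beta>
  proof -
    define B where "B = \<beta> powr \<alpha>"
    define K where "K = (of_real (\<beta> powr p * exp (-(a * B))) :: complex)"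
    have "(\<lambda>m. K * ((-d * of_real B)^m /\<^sub>R fact m)) sums (K * exp (-d * of_real B))"
      by (intro sums_mult exp_converges)
    moreover have "K * ((-d * of_real B)^m /\<^sub>R fact m) = F m \<beta>" for m
    proof -
      have "\<beta> powr (p + \<alpha> * real m) = \<beta> powr p * B^m"
        using that by (simp add: B_def powr_add powr_power mult.commute)
      moreover have "(- (d * x))^m = x^m * (-d)^m" for x :: complex
        by (metis minus_mult_left mult.commute power_mult_distrib)
      ultimately show ?thesis by (simp add: K_def F_def B_def power_mult_distrib scaleR_conv_of_real)
    qed
    moreover have "K * exp (-d * of_real B) = g \<beta>"
    proof -
      have KK: "K = of_real (\<beta> powr p) * exp (- (of_real a * of_real B))"
        by (simp add: K_def flip: exp_of_real)
      have X: "- (of_real a * of_real B) + (-d * of_real B) = - (c * of_real B)"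
        by (simp add: d_def algebra_simps)
      have "exp (- (of_real a * of_real B)) * exp (-d * of_real B) = exp (- (c * of_real B))"
        by (metis X exp_add)
      hence "K * exp (-d * of_real B) = of_real (\<beta> powr p) * exp (- (c * of_real B))"
        using KK by (metis mult.assoc)
      thus ?thesis by (simp add: g_def B_def)
    qed
    ultimately have "(\<lambda>m. F m \<beta>) sums g \<beta>" by simp
    thus ?thesis by (simp add: f_def sums_def)
  qed
  have gi: "g integrable_on {0<..}"
    and lim: "(\<lambda>N. integral {0<..} (f N)) \<longlonglongrightarrow> integral {0<..} g"
    using dominated_convergence[of f "{0<..}" h g] fN hi le conv
    by (auto simp: has_integral_integrable)
  have "(\<lambda>N. integral {0<..} (f N)) = (\<lambda>N. \<Sum>m<N. T m)"
    using fN by (auto simp: integral_unique)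
  with lim have Tsum: "T sums integral {0<..} g" by (simp add: sums_def)
  define K where "K = (of_real (Gamma s / (\<alpha> * a powr s)) :: complex)"
  have nz: "norm (d / of_real a) < 1" using r a by (simp add: r_def norm_divide)
  have "(\<lambda>m. K * (((- of_real s) gchoose m) * (d / of_real a)^m)) sums
          (K * (1 + d / of_real a) powr (- of_real s))"
    by (intro sums_mult gen_binomial_complex nz)
  moreover have "K * (((- of_real s) gchoose m) * (d / of_real a)^m) = T m" for m
  proof -
    have gs: "Gamma s \<noteq> 0" using s by (simp add: Gamma_real_pos less_imp_neq[symmetric])
    have "((- of_real s :: complex) gchoose m) = (-1)^m * of_real (pochhammer s m) / fact m"
      by (simp add: gbinomial_pochhammer pochhammer_of_real)
    also have "pochhammer s m = Gamma (s + real m) / Gamma s"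
      using s by (intro pochhammer_Gamma) (auto elim!: nonpos_Ints_cases)
    finally have gb: "((- of_real s :: complex) gchoose m) = (-1)^m * of_real (Gamma (s + real m) / Gamma s) / fact m" .
    have ap: "a powr (s + real m) = a powr s * a^m" using a by (simp add: powr_add powr_realpow)
    have R: "Gamma s / (\<alpha> * a powr s) * (Gamma (s + real m) / Gamma s) / fact m / a^m
          = Gamma (s + real m) / (\<alpha> * a powr (s + real m)) / fact m"
      using gs a assms by (simp add: ap divide_simps)
    have L1: "K * (((- of_real s) gchoose m) * (d / of_real a)^m) =
        of_real (Gamma s / (\<alpha> * a powr s) * (Gamma (s + real m) / Gamma s) / fact m / a^m) * ((-1)^m * d^m)"
      using a by (simp add: K_def gb power_divide mult.assoc mult.left_commute)
    have L2: "T m = of_real (Gamma (s + real m) / (\<alpha> * a powr (s + real m)) / fact m) * ((-1)^m * d^m)"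
      by (simp add: T_def scaleR_conv_of_real power_minus[of d] divide_inverse mult_ac)
    show ?thesis by (simp only: L1 L2 R)
  qed
  moreover have "K * (1 + d / of_real a) powr (- of_real s) = of_real (Gamma s / \<alpha>) * c powr (- of_real s)"
  proof -
    have cd: "1 + d / of_real a = c / of_real a" using a by (simp add: d_def field_simps)
    have e1: "(1 + d / of_real a) powr (- of_real s) = c powr (- of_real s) * exp (- (- of_real s) * of_real (ln a))"
      unfolding cd by (rule powr_complex_div_real[OF a c0])
    have e2: "- (- of_real s) * of_real (ln a) = (of_real (s * ln a) :: complex)" by simp
    have e3: "exp (of_real (s * ln a)) = (of_real (a powr s) :: complex)"
    proof -
      have "a powr s = exp (s * ln a)" using a by (simp add: powr_def)
      thus ?thesis by (simp only: exp_of_real)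
    qed
    have e4: "(of_real (Gamma s / (\<alpha> * a powr s)) * of_real (a powr s) :: complex) = of_real (Gamma s / \<alpha>)"
    proof -
      have "Gamma s / (\<alpha> * a powr s) * a powr s = Gamma s / \<alpha>" using a by simp
      thus ?thesis by (metis of_real_mult)
    qed
    have "K * (1 + d / of_real a) powr (- of_real s) = (K * of_real (a powr s)) * c powr (- of_real s)"
      unfolding e1 e2 e3 by (simp add: mult_ac)
    also have "K * of_real (a powr s) = of_real (Gamma s / \<alpha>)" unfolding K_def by (rule e4)
    finally show ?thesis .
  qed
  ultimately have "T sums (of_real (Gamma s / \<alpha>) * c powr (- of_real s))" by simp
  with Tsum have "integral {0<..} g = of_real (Gamma s / \<alpha>) * c powr (- of_real s)"
    using sums_unique2 by blast
  moreover have "(g has_integral integral {0<..} g) {0<..}" using gi by (rule integrable_integral)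
  ultimately have "(g has_integral (of_real (Gamma s / \<alpha>) * c powr (- of_real s))) {0<..}" by simp
  thus ?thesis unfolding g_def s_def .
qed



lemma lin_le_powr:
  fixes \<alpha> b k :: real
  assumes "\<alpha> > 1" "b > 0" "k \<ge> 0"
  obtains K where "\<And>\<beta>. \<beta> \<ge> 0 \<Longrightarrow> k * \<beta> \<le> K + b * \<beta> powr \<alpha>"
proof -
  define \<beta>0 where "\<beta>0 = (k/b) powr (1/(\<alpha>-1))"
  have b0: "\<beta>0 \<ge> 0" by (simp add: \<beta>0_def)
  have b0p: "\<beta>0 powr (\<alpha> - 1) = k / b"
    using assms by (simp add: \<beta>0_def powr_powr)
  have "k * \<beta> \<le> k * \<beta>0 + b * \<beta> powr \<alpha>" if "\<beta> \<ge> 0" for \<beta>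
  proof (cases "\<beta> \<le> \<beta>0")
    case True
    have "k * \<beta> \<le> k * \<beta>0" using True assms by (simp add: mult_left_mono)
    moreover have "b * \<beta> powr \<alpha> \<ge> 0" using assms by simp
    ultimately show ?thesis by linarith
  next
    case False
    hence bp: "\<beta> > 0" using b0 by linarith
    have "k / b \<le> \<beta> powr (\<alpha> - 1)" unfolding b0p[symmetric]
      using False b0 assms by (intro powr_mono2) auto
    hence "k \<le> b * \<beta> powr (\<alpha> - 1)" using assms by (simp add: field_simps)
    hence "k * \<beta> \<le> b * (\<beta> powr (\<alpha> - 1) * \<beta>)" using bp
      by (metis mult.assoc mult_right_mono less_imp_le)
    also have "\<beta> powr (\<alpha> - 1) * \<beta> = \<beta> powr \<alpha>" using bp by (simp add: powr_diff)
    finally have "k * \<beta> \<le> b * \<beta> powr \<alpha>" .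
    moreover have "k * \<beta>0 \<ge> 0" using assms b0 by simp
    ultimately show ?thesis by linarith
  qed
  thus ?thesis using that by blast
qed

lemma fourier_half:
  fixes \<alpha> z :: real and c :: complex
  assumes "\<alpha> > 1" "Re c > 0"
  defines "T \<equiv> \<lambda>n::nat. ((- \<i> * of_real z)^n /\<^sub>R fact n) *
              (of_real (Gamma ((real n + 1)/\<alpha>) / \<alpha>) * c powr (- of_real ((real n + 1)/\<alpha>)))"
  shows "T sums integral {0<..} (\<lambda>\<beta>. exp (- \<i> * of_real (\<beta> * z)) * exp (- (c * of_real (\<beta> powr \<alpha>))))"
    and "(\<lambda>\<beta>. exp (- \<i> * of_real (\<beta> * z)) * exp (- (c * of_real (\<beta> powr \<alpha>)))) integrable_on {0<..}"
proof -
  define g where "g = (\<lambda>\<beta>. exp (- \<i> * of_real (\<beta> * z)) * exp (- (c * of_real (\<beta> powr \<alpha>))))"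
  define G where "G = (\<lambda>n \<beta>. ((- \<i> * of_real z)^n /\<^sub>R fact n) *
              (of_real (\<beta> powr real n) * exp (- (c * of_real (\<beta> powr \<alpha>)))))"
  have GT: "(G n has_integral T n) {0<..}" for n
  proof -
    have "real n > -1" by simp
    from complex_moment[OF _ this assms(2), of \<alpha>] assms(1)
    have "((\<lambda>\<beta>. of_real (\<beta> powr real n) * exp (- (c * of_real (\<beta> powr \<alpha>)))) has_integral
          (of_real (Gamma ((real n+1)/\<alpha>) / \<alpha>) * c powr (- of_real ((real n+1)/\<alpha>)))) {0<..}" by simp
    from has_integral_mult_right[OF this, of "(- \<i> * of_real z)^n /\<^sub>R fact n"]
    show ?thesis unfolding G_def T_def .
  qed
  define f where "f = (\<lambda>N \<beta>. \<Sum>n<N. G n \<beta>)"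
  have fN: "(f N has_integral (\<Sum>n<N. T n)) {0<..}" for N
    unfolding f_def by (intro has_integral_sum) (auto simp: GT)
  define b where "b = Re c / 2"
  have b: "b > 0" using assms by (simp add: b_def)
  obtain K where K: "\<And>\<beta>. \<beta> \<ge> 0 \<Longrightarrow> \<bar>z\<bar> * \<beta> \<le> K + b * \<beta> powr \<alpha>"
    using lin_le_powr[OF assms(1) b, of "\<bar>z\<bar>"] by auto
  define h where "h = (\<lambda>\<beta>::real. exp K * (\<beta> powr 0 * exp (-(b * \<beta> powr \<alpha>))))"
  have hi: "h integrable_on {0<..}"
  proof -
    have "((\<lambda>\<beta>. \<beta> powr 0 * exp (-(b * \<beta> powr \<alpha>))) has_integral
           (Gamma ((0+1)/\<alpha>) / (\<alpha> * b powr ((0+1)/\<alpha>)))) {0<..}"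
      using real_moment[of \<alpha> b 0] assms b by simp
    from has_integral_mult_right[OF this, of "exp K"] show ?thesis
      unfolding h_def by (auto simp: has_integral_integrable)
  qed
  have le: "norm (f N \<beta>) \<le> h \<beta>" if "\<beta> \<in> {0<..}" for N \<beta>
  proof -
    have bp: "\<beta> > 0" using that by simp
    define B where "B = \<beta> powr \<alpha>"
    have B: "B \<ge> 0" by (simp add: B_def)
    have ne: "norm (exp (- (c * of_real B))) = exp (- (Re c * B))"
      by (simp add: norm_exp_eq_Re)
    have nG: "norm (G n \<beta>) = (\<bar>z\<bar> * \<beta>)^n / fact n * exp (- (Re c * B))" for n
    proof -
      have n1: "norm ((- \<i> * of_real z)^n /\<^sub>R fact n) = \<bar>z\<bar>^n / fact n"
        by (simp add: norm_power norm_mult divide_inverse mult.commute)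
      have n2: "norm (of_real (\<beta> powr real n) :: complex) = \<beta>^n"
        using bp by (simp add: powr_realpow norm_power)
      have "norm (G n \<beta>) = norm ((- \<i> * of_real z)^n /\<^sub>R fact n) *
           (norm (of_real (\<beta> powr real n) :: complex) * norm (exp (- (c * of_real B))))"
        unfolding G_def B_def by (simp only: norm_mult)
      also have "\<dots> = \<bar>z\<bar>^n / fact n * (\<beta>^n * exp (- (Re c * B)))" by (simp only: n1 n2 ne)
      finally show ?thesis by (simp add: power_mult_distrib)
    qed
    have "norm (f N \<beta>) \<le> (\<Sum>n<N. norm (G n \<beta>))" unfolding f_def by (rule norm_sum)
    also have "\<dots> = (\<Sum>n<N. (\<bar>z\<bar> * \<beta>)^n / fact n) * exp (- (Re c * B))"
      by (simp add: nG sum_distrib_right)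
    also have "\<dots> \<le> exp (\<bar>z\<bar> * \<beta>) * exp (- (Re c * B))"
      using exp_partial_le[of "\<bar>z\<bar> * \<beta>" N] bp by (intro mult_right_mono) auto
    also have "\<dots> \<le> exp (K + b * B) * exp (- (Re c * B))"
      using K[of \<beta>] bp by (intro mult_right_mono) (auto simp: B_def)
    also have "\<dots> = h \<beta>" using bp by (simp add: h_def B_def b_def flip: exp_add)
    finally show ?thesis .
  qed
  have conv: "(\<lambda>N. f N \<beta>) \<longlonglongrightarrow> g \<beta>" if "\<beta> \<in> {0<..}" for \<beta>
  proof -
    have bp: "\<beta> > 0" using that by simp
    define E where "E = exp (- (c * of_real (\<beta> powr \<alpha>)))"
    have "(\<lambda>n. E * ((- \<i> * of_real (\<beta> * z))^n /\<^sub>R fact n)) sums (E * exp (- \<i> * of_real (\<beta> * z)))"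
      by (intro sums_mult exp_converges)
    moreover have "E * ((- \<i> * of_real (\<beta> * z))^n /\<^sub>R fact n) = G n \<beta>" for n
    proof -
      have "(of_real (\<beta> powr real n) :: complex) = of_real \<beta> ^ n"
        using bp by (simp add: powr_realpow)
      moreover have "(- (\<i> * (of_real \<beta> * of_real z))) ^ n = of_real \<beta> ^ n * (- (\<i> * of_real z)) ^ n"
        by (metis mult.left_commute minus_mult_right power_mult_distrib)
      ultimately show ?thesis by (simp add: G_def E_def mult_ac)
    qed
    ultimately have "(\<lambda>n. G n \<beta>) sums g \<beta>" by (simp add: g_def E_def mult.commute)
    thus ?thesis by (simp add: f_def sums_def)
  qed
  have gi: "g integrable_on {0<..}"
    and lim: "(\<lambda>N. integral {0<..} (f N)) \<longlonglongrightarrow> integral {0<..} g"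
    using dominated_convergence[of f "{0<..}" h g] fN hi le conv
    by (auto simp: has_integral_integrable)
  have "(\<lambda>N. integral {0<..} (f N)) = (\<lambda>N. \<Sum>n<N. T n)"
    using fN by (auto simp: integral_unique)
  with lim show "T sums integral {0<..} g" by (simp add: sums_def)
  show "g integrable_on {0<..}" by (rule gi)
qed



lemma has_integral_reflect_UNIV:
  fixes f :: "real \<Rightarrow> 'a::banach"
  assumes "(f has_integral I) UNIV"
  shows "((\<lambda>x. f (-x)) has_integral I) UNIV"
proof -
  have nb: "\<not> (\<exists>a b. (UNIV::real set) = cbox a b)"
    using not_bounded_UNIV bounded_cbox by metis
  show ?thesis
  proof (subst has_integral_alt, simp only: nb if_False, intro allI impI)
    fix e :: real assume e: "e > 0"
    obtain B where B: "B > 0" and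
      H: "\<forall>a b. ball 0 B \<subseteq> cbox a b \<longrightarrow>
        (\<exists>z. ((\<lambda>x. if x \<in> UNIV then f x else 0) has_integral z) (cbox a b) \<and> norm (z - I) < e)"
      using has_integral_altD[OF assms nb e] by blast
    show "\<exists>B>0. \<forall>a b. ball 0 B \<subseteq> cbox a b \<longrightarrow>
        (\<exists>z. ((\<lambda>x. if x \<in> UNIV then f (- x) else 0) has_integral z) (cbox a b) \<and> norm (z - I) < e)"
    proof (intro exI[of _ B] conjI allI impI B)
      fix a b :: real assume ab: "ball 0 B \<subseteq> cbox a b"
      have "ball 0 B \<subseteq> cbox (-b) (-a)"
      proof
        fix x :: real assume "x \<in> ball 0 B"
        hence "-x \<in> ball 0 B" by simp
        hence "-x \<in> cbox a b" using ab by blast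
        thus "x \<in> cbox (-b) (-a)" by auto
      qed
      hence "\<exists>z. ((\<lambda>x. if x \<in> UNIV then f x else 0) has_integral z) (cbox (-b) (-a)) \<and> norm (z - I) < e"
        using H by blast
      then obtain z where z: "(f has_integral z) {-b..-a}" "norm (z - I) < e"
        by auto
      hence "((\<lambda>x. f (-x)) has_integral z) {a..b}"
        using has_integral_reflect_real[of f z "-a" "-b"] z(1) by simp
      thus "\<exists>z. ((\<lambda>x. if x \<in> UNIV then f (- x) else 0) has_integral z) (cbox a b) \<and> norm (z - I) < e"
        using z by auto
    qed
  qed
qed

lemma powr_polar:
  fixes \<eta> \<theta> w :: real
  assumes "\<eta> > 0" "\<bar>\<theta>\<bar> < pi"
  shows "(of_real \<eta> * exp (\<i> * of_real \<theta>)) powr (of_real w) = of_real (\<eta> powr w) * exp (\<i> * of_real (w * \<theta>))"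
proof -
  have "Ln (of_real \<eta> * exp (\<i> * of_real \<theta>)) = Ln (of_real \<eta>) + Ln (exp (\<i> * of_real \<theta>))"
    using assms by (intro Ln_times_of_real) auto
  also have "Ln (exp (\<i> * of_real \<theta>)) = \<i> * of_real \<theta>" using assms by (intro Ln_exp) auto
  also have "Ln (of_real \<eta>) = of_real (ln \<eta>)" using assms by (intro Ln_of_real) auto
  finally have L: "Ln (of_real \<eta> * exp (\<i> * of_real \<theta>)) = of_real (ln \<eta>) + \<i> * of_real \<theta>" .
  have nz: "of_real \<eta> * exp (\<i> * of_real \<theta>) \<noteq> 0" using assms by simp
  have "(of_real \<eta> * exp (\<i> * of_real \<theta>)) powr (of_real w) = exp (of_real w * (of_real (ln \<eta>) + \<i> * of_real \<theta>))"
    using nz by (simp add: powr_def L)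
  also have "\<dots> = exp (of_real (w * ln \<eta>)) * exp (\<i> * of_real (w * \<theta>))"
    by (simp add: algebra_simps flip: exp_add)
  also have "exp (of_real (w * ln \<eta>)) = (of_real (\<eta> powr w) :: complex)"
  proof -
    have "\<eta> powr w = exp (w * ln \<eta>)" using assms by (simp add: powr_def)
    thus ?thesis by (simp only: exp_of_real)
  qed
  finally show ?thesis .
qed

lemma trig_combine:
  fixes \<phi> :: real and n :: nat
  shows "(- \<i>)^n * exp (\<i> * of_real \<phi>) + \<i>^n * exp (- (\<i> * of_real \<phi>)) = of_real (2 * cos (\<phi> - real n * pi / 2))"
proof -
  have mi: "(- \<i>) = exp (\<i> * of_real (- pi/2))" by (simp add: exp_eq_polar cis_conv_exp[symmetric])
  have pi_: "\<i> = exp (\<i> * of_real (pi/2))" by (metis cis_conv_exp cis_pi_half)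
  have "(- \<i>)^n = exp (\<i> * of_real (- (real n * pi/2)))"
    unfolding mi by (simp add: exp_of_nat_mult[symmetric] algebra_simps)
  moreover have "\<i>^n = exp (- (\<i> * of_real (- (real n * pi/2))))"
    by (subst pi_) (simp add: exp_of_nat_mult[symmetric] algebra_simps)
  ultimately have "(- \<i>)^n * exp (\<i> * of_real \<phi>) + \<i>^n * exp (- (\<i> * of_real \<phi>))
      = exp (\<i> * of_real (\<phi> - real n * pi / 2)) + exp (- (\<i> * of_real (\<phi> - real n * pi / 2)))"
    by (simp add: algebra_simps flip: exp_add)
  also have "\<dots> = 2 * cos (of_real (\<phi> - real n * pi / 2))"
    by (simp add: cos_exp_eq)
  also have "\<dots> = of_real (2 * cos (\<phi> - real n * pi / 2))"
    by (simp only: cos_of_real of_real_mult of_real_numeral)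
  finally show ?thesis .
qed



lemma rGamma_refl_real:
  fixes s :: real assumes "s > 0"
  shows "rGamma (1 - s) = Gamma s * sin (pi * s) / pi"
proof -
  have "rGamma (complex_of_real s) * rGamma (1 - complex_of_real s) = sin (of_real pi * of_real s) / of_real pi"
    by (rule rGamma_reflection_complex)
  moreover have e1: "1 - complex_of_real s = of_real (1 - s)" by simp
  moreover have e2: "of_real pi * complex_of_real s = of_real (pi * s)" by simp
  ultimately have "rGamma (complex_of_real s) * rGamma (complex_of_real (1 - s)) = sin (of_real (pi * s)) / of_real pi"
    by (simp only: e1 e2)
  hence "of_real (rGamma s) * of_real (rGamma (1 - s)) = (of_real (sin (pi * s)) / of_real pi :: complex)"
    by (simp only: rGamma_complex_of_real sin_of_real)
  hence R: "rGamma s * rGamma (1 - s) = sin (pi * s) / pi"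
    by (metis of_real_mult of_real_divide of_real_eq_iff)
  have "Gamma s > 0" using assms by (rule Gamma_real_pos)
  hence nz: "rGamma s \<noteq> 0" by (auto simp: Gamma_def)
  have G: "Gamma s * rGamma s = 1" using nz by (simp add: Gamma_def)
  have "rGamma (1 - s) = Gamma s * (rGamma s * rGamma (1 - s))" using G
    by (metis mult.assoc mult_1)
  also have "\<dots> = Gamma s * (sin (pi * s) / pi)" using R by simp
  finally show ?thesis by simp
qed

lemma cos_shift:
  fixes y :: real and n :: nat
  shows "cos (y - pi/2 - real n * pi) = (-1)^n * sin y"
proof -
  have "y - pi/2 - real n * pi = y - (pi/2 + real n * pi)" by simp
  hence "cos (y - pi/2 - real n * pi) = cos y * cos (pi/2 + real n * pi) + sin y * sin (pi/2 + real n * pi)"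
    by (simp only: cos_diff)
  also have "cos (pi/2 + real n * pi) = 0" by (simp add: cos_add sin_npi)
  also have "sin (pi/2 + real n * pi) = (-1)^n" by (simp add: sin_add sin_npi cos_npi)
  finally show ?thesis by simp
qed



lemma term_eq:
  fixes \<alpha> \<eta> x :: real and n :: nat
  assumes "1 < \<alpha>" "\<alpha> \<le> 2" "\<eta> > 0"
  defines "\<theta> \<equiv> pi * (2 - \<alpha>) / 2" and "s \<equiv> (real n + 1)/\<alpha>"
  shows "1 / (2 * of_real pi) *
     (((- \<i> * of_real x)^n /\<^sub>R fact n) * (of_real (Gamma s / \<alpha>) * (of_real \<eta> * exp (\<i> * of_real (- \<theta>))) powr (- of_real s))
      + ((- \<i> * of_real (- x))^n /\<^sub>R fact n) * (of_real (Gamma s / \<alpha>) * (of_real \<eta> * exp (\<i> * of_real \<theta>)) powr (- of_real s)))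
     = of_real ((1/\<alpha>) * ((-x)^n / fact n) * \<eta> powr (- s) * rGamma (1 - s))"
proof -
  have t0: "0 \<le> \<theta>" unfolding \<theta>_def using assms(2) pi_gt_zero by simp
  have "pi * (2 - \<alpha>) < pi * 2" using assms(1) pi_gt_zero by (intro mult_strict_left_mono) auto
  hence t1: "\<theta> < pi" unfolding \<theta>_def by simp
  have th: "\<bar>\<theta>\<bar> < pi" "\<bar>-\<theta>\<bar> < pi" using t0 t1 by auto
  have ms: "- complex_of_real s = of_real (- s)" by simp
  have P1: "(of_real \<eta> * exp (\<i> * of_real (- \<theta>))) powr (- of_real s) = of_real (\<eta> powr (-s)) * exp (\<i> * of_real (s * \<theta>))"
    unfolding ms using powr_polar[OF assms(3) th(2), of "-s"] by simp
  have P2: "(of_real \<eta> * exp (\<i> * of_real \<theta>)) powr (- of_real s) = of_real (\<eta> powr (-s)) * exp (- (\<i> * of_real (s * \<theta>)))"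
    unfolding ms using powr_polar[OF assms(3) th(1), of "-s"] by simp
  define A where "A = x^n / fact n * (Gamma s / \<alpha>) * \<eta> powr (-s)"
  have X1: "(- \<i> * complex_of_real x)^n = (- \<i>)^n * of_real (x^n)"
    by (metis power_mult_distrib of_real_power)
  have "(- \<i> * complex_of_real (- x)) = \<i> * of_real x" by simp
  hence X2: "(- \<i> * complex_of_real (- x))^n = \<i>^n * of_real (x^n)"
    by (metis power_mult_distrib of_real_power)
  have T1: "((- \<i> * of_real x)^n /\<^sub>R fact n) * (of_real (Gamma s / \<alpha>) * (of_real \<eta> * exp (\<i> * of_real (- \<theta>))) powr (- of_real s))
      = of_real A * ((- \<i>)^n * exp (\<i> * of_real (s * \<theta>)))"
    unfolding P1 X1 A_def by (simp add: scaleR_conv_of_real mult_ac divide_inverse)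
  have T2: "((- \<i> * of_real (- x))^n /\<^sub>R fact n) * (of_real (Gamma s / \<alpha>) * (of_real \<eta> * exp (\<i> * of_real \<theta>)) powr (- of_real s))
      = of_real A * (\<i>^n * exp (- (\<i> * of_real (s * \<theta>))))"
    unfolding P2 X2 A_def by (simp add: scaleR_conv_of_real mult_ac divide_inverse)
  have ang: "s * \<theta> - real n * pi / 2 = pi * s - pi/2 - real n * pi"
  proof -
    have "s * \<alpha> = real n + 1" using assms(1) by (simp add: s_def)
    thus ?thesis by (simp add: \<theta>_def algebra_simps) (simp add: field_simps)
  qed
  have C: "cos (s * \<theta> - real n * pi / 2) = (-1)^n * sin (pi * s)"
    unfolding ang by (rule cos_shift)
  have s0: "s > 0" using assms(1) by (simp add: s_def)
  have "1 / (2 * of_real pi) * (of_real A * ((- \<i>)^n * exp (\<i> * of_real (s * \<theta>))) + of_real A * (\<i>^n * exp (- (\<i> * of_real (s * \<theta>)))))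
     = 1 / (2 * of_real pi) * (of_real A * of_real (2 * cos (s * \<theta> - real n * pi / 2)))"
    by (simp only: distrib_left[symmetric] trig_combine)
  also have "\<dots> = of_real (1 / (2 * pi) * (A * (2 * cos (s * \<theta> - real n * pi / 2))))"
    by simp
  also have "1 / (2 * pi) * (A * (2 * cos (s * \<theta> - real n * pi / 2))) = (1/\<alpha>) * ((-x)^n / fact n) * \<eta> powr (- s) * rGamma (1 - s)"
    unfolding C rGamma_refl_real[OF s0] A_def power_minus[of x n] by (simp add: field_simps)
  finally show ?thesis unfolding T1 T2 .
qed



lemma stable_key:
  fixes \<alpha> \<eta> x :: real
  assumes "1 < \<alpha>" "\<alpha> \<le> 2" "\<eta> > 0"
  shows "(\<lambda>n. of_real ((1/\<alpha>) * ((-x)^n / fact n) * \<eta> powr (- ((real n + 1)/\<alpha>)) * rGamma (1 - (real n + 1)/\<alpha>)))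
           sums stable_density \<alpha> x (2 - \<alpha>) \<eta>"
proof -
  define \<theta> where "\<theta> = pi * (2 - \<alpha>) / 2"
  have t0: "0 \<le> \<theta>" unfolding \<theta>_def using assms(2) pi_gt_zero by simp
  have "pi * (2 - \<alpha>) < pi * 1" using assms(1) pi_gt_zero by (intro mult_strict_left_mono) auto
  hence t1: "\<theta> < pi/2" unfolding \<theta>_def by simp
  have cpos: "cos \<theta> > 0" using t0 t1 by (intro cos_gt_zero_pi) auto
  define c1 where "c1 = of_real \<eta> * exp (\<i> * of_real (- \<theta>))"
  define c2 where "c2 = of_real \<eta> * exp (\<i> * of_real \<theta>)"
  have Rc1: "Re c1 > 0" using assms(3) cpos by (simp add: c1_def Re_exp)
  have Rc2: "Re c2 > 0" using assms(3) cpos by (simp add: c2_def Re_exp)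
  define g1 where "g1 = (\<lambda>\<beta>. exp (- \<i> * of_real (\<beta> * x)) * exp (- (c1 * of_real (\<beta> powr \<alpha>))))"
  define g2 where "g2 = (\<lambda>\<beta>. exp (- \<i> * of_real (\<beta> * (-x))) * exp (- (c2 * of_real (\<beta> powr \<alpha>))))"
  define T1 where "T1 = (\<lambda>n::nat. ((- \<i> * of_real x)^n /\<^sub>R fact n) *
              (of_real (Gamma ((real n + 1)/\<alpha>) / \<alpha>) * c1 powr (- of_real ((real n + 1)/\<alpha>))))"
  define T2 where "T2 = (\<lambda>n::nat. ((- \<i> * of_real (-x))^n /\<^sub>R fact n) *
              (of_real (Gamma ((real n + 1)/\<alpha>) / \<alpha>) * c2 powr (- of_real ((real n + 1)/\<alpha>))))"
  have S1: "T1 sums integral {0<..} g1" and G1: "g1 integrable_on {0<..}"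
    using fourier_half[OF assms(1) Rc1, of x] unfolding T1_def g1_def by auto
  have S2: "T2 sums integral {0<..} g2" and G2: "g2 integrable_on {0<..}"
    using fourier_half[OF assms(1) Rc2, of "-x"] unfolding T2_def g2_def by auto
  define I1 where "I1 = integral {0<..} g1"
  define I2 where "I2 = integral {0<..} g2"
  define F where "F = (\<lambda>\<beta>::real. exp (- \<i> * of_real (\<beta> * x)) *
        exp (- of_real (\<eta> * \<bar>\<beta>\<bar> powr \<alpha>) * exp (- \<i> * of_real (pi * (2 - \<alpha>) / 2 * sgn \<beta>))))"
  have FP: "F \<beta> = g1 \<beta>" if "\<beta> \<in> {0<..}" for \<beta>
  proof -
    have b: "\<beta> > 0" using that by simp
    have "F \<beta> = exp (- \<i> * of_real (\<beta> * x)) * exp (- of_real (\<eta> * \<beta> powr \<alpha>) * exp (- \<i> * of_real \<theta>))"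
      using b by (simp add: F_def \<theta>_def)
    also have "\<dots> = g1 \<beta>" by (simp add: g1_def c1_def algebra_simps)
    finally show ?thesis .
  qed
  have FN: "F (- \<beta>) = g2 \<beta>" if "\<beta> \<in> {0<..}" for \<beta>
    using that by (simp add: F_def g2_def c2_def \<theta>_def algebra_simps)
  have H1: "(F has_integral I1) {0<..}"
    using has_integral_eq[OF _ integrable_integral[OF G1]] FP unfolding I1_def by metis
  have H2': "((\<lambda>\<beta>. F (- \<beta>)) has_integral I2) {0<..}"
    using has_integral_eq[OF _ integrable_integral[OF G2]] FN unfolding I2_def by metis
  have "((\<lambda>\<beta>. if \<beta> \<in> {0<..} then F (- \<beta>) else 0) has_integral I2) UNIV"
    using H2' by (simp only: has_integral_restrict_UNIV)
  from has_integral_reflect_UNIV[OF this]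
  have "((\<lambda>\<beta>. if - \<beta> \<in> {0<..} then F (- (- \<beta>)) else 0) has_integral I2) UNIV" by simp
  moreover have "(\<lambda>\<beta>. if - \<beta> \<in> {0<..} then F (- (- \<beta>)) else 0) = (\<lambda>\<beta>. if \<beta> \<in> {..<0} then F \<beta> else 0)"
    by auto
  ultimately have "((\<lambda>\<beta>. if \<beta> \<in> {..<0} then F \<beta> else 0) has_integral I2) UNIV" by simp
  hence H2: "(F has_integral I2) {..<0}" by (simp only: has_integral_restrict_UNIV)
  have HU: "(F has_integral (I1 + I2)) ({0<..} \<union> {..<0})"
  proof (rule has_integral_Un[OF H1 H2])
    have "{0<..} \<inter> {..<0::real} = {}" by auto
    thus "negligible ({0<..} \<inter> {..<0::real})" by simp
  qed
  have "negligible {\<beta> \<in> ({0<..} \<union> {..<0}) - UNIV. F \<beta> \<noteq> 0}"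
    by (rule negligible_subset[of "{}"]) auto
  moreover have "negligible {\<beta> \<in> UNIV - ({0<..} \<union> {..<0::real}). F \<beta> \<noteq> 0}"
    by (rule negligible_subset[of "{0}"]) auto
  ultimately have HUNIV: "(F has_integral (I1 + I2)) UNIV"
    using HU has_integral_spike_set_eq by blast
  have SD: "stable_density \<alpha> x (2 - \<alpha>) \<eta> = 1 / (2 * of_real pi) * (I1 + I2)"
    unfolding stable_density_def using HUNIV unfolding F_def by (simp add: integral_unique)
  have "(\<lambda>n. 1 / (2 * of_real pi) * (T1 n + T2 n)) sums (1 / (2 * of_real pi) * (I1 + I2))"
    using S1 S2 unfolding I1_def I2_def by (intro sums_mult sums_add)
  moreover have "1 / (2 * of_real pi) * (T1 n + T2 n) =
      of_real ((1/\<alpha>) * ((-x)^n / fact n) * \<eta> powr (- ((real n + 1)/\<alpha>)) * rGamma (1 - (real n + 1)/\<alpha>))" for n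
    unfolding T1_def T2_def c1_def c2_def \<theta>_def by (rule term_eq[OF assms])
  ultimately show ?thesis unfolding SD by simp
qed



lemma eta_pow:
  fixes lam t \<nu> :: real and n :: nat
  assumes "lam > 0" "t > 0" "\<nu> > 0"
  shows "(lam powr (2/\<nu>) * t) powr (- ((real n + 1) / (2/\<nu>))) = (1 / (lam * t powr (\<nu>/2)))^(Suc n)"
proof -
  have E: "- ((real n + 1) / (2/\<nu>)) = - ((real n + 1) * \<nu> / 2)" by simp
  have "(lam powr (2/\<nu>) * t) powr (- ((real n + 1) / (2/\<nu>)))
      = (lam powr (2/\<nu>)) powr (- ((real n + 1) * \<nu> / 2)) * t powr (- ((real n + 1) * \<nu> / 2))"
    unfolding E by (rule powr_mult)
  also have "(lam powr (2/\<nu>)) powr (- ((real n + 1) * \<nu> / 2)) = lam powr (- (real n + 1))"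
  proof -
    have e: "2/\<nu> * (- ((real n + 1) * \<nu> / 2)) = - (real n + 1)" using assms by (simp add: field_simps)
    show ?thesis by (simp only: powr_powr e)
  qed
  also have "t powr (- ((real n + 1) * \<nu> / 2)) = (t powr (\<nu>/2)) powr (- (real n + 1))"
  proof -
    have e2: "\<nu>/2 * (- (real n + 1)) = - ((real n + 1) * \<nu> / 2)" by (simp add: field_simps)
    show ?thesis by (simp only: powr_powr e2)
  qed
  also have "lam powr (- (real n + 1)) * (t powr (\<nu>/2)) powr (- (real n + 1)) = (lam * t powr (\<nu>/2)) powr (- (real n + 1))"
    by (rule powr_mult[symmetric])
  also have "\<dots> = inverse ((lam * t powr (\<nu>/2)) powr (real n + 1))"
    by (rule powr_minus)
  also have "(lam * t powr (\<nu>/2)) powr (real n + 1) = (lam * t powr (\<nu>/2)) ^ (Suc n)"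
  proof -
    have pos: "lam * t powr (\<nu>/2) > 0" using assms by simp
    have "real n + 1 = real (Suc n)" by simp
    thus ?thesis using powr_realpow[OF pos, of "Suc n"] by (simp add: add.commute)
  qed
  also have "inverse ((lam * t powr (\<nu>/2)) ^ (Suc n)) = (1 / (lam * t powr (\<nu>/2)))^(Suc n)"
    by (simp add: power_one_over inverse_eq_divide)
  finally show ?thesis .
qed

lemma alg: fixes c u f w r :: real shows "c * (u / f) * w * r = c * (u * w) * (r / f)"
  by (simp add: divide_inverse mult_ac)

theorem theorem5p5:
  fixes lam \<nu> x t :: real
  assumes "lam > 0" and "1 \<le> \<nu>" and "\<nu> < 2" and "t > 0"
  shows "complex_of_real (u_sol lam \<nu> x t) =
           of_real (2 / \<nu>) * of_real (1 / (2 * lam * t powr (\<nu>/2))) *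
           stable_density (2/\<nu>) (\<bar>x\<bar> / (lam * t powr (\<nu>/2))) (2/\<nu> * (\<nu> - 1)) 1
       \<and> complex_of_real (u_sol lam \<nu> x t) =
           of_real (1 / \<nu>) *
           stable_density (2/\<nu>) \<bar>x\<bar> (2/\<nu> * (\<nu> - 1)) (lam powr (2/\<nu>) * t)"
proof -
  define \<alpha> where "\<alpha> = 2 / \<nu>"
  have nu0: "\<nu> > 0" using assms by simp
  have a1: "1 < \<alpha>" using assms by (simp add: \<alpha>_def field_simps)
  have a2: "\<alpha> \<le> 2" using assms by (simp add: \<alpha>_def field_simps)
  have gam: "2/\<nu> * (\<nu> - 1) = 2 - \<alpha>" using nu0 by (simp add: \<alpha>_def field_simps)
  define q where "q = 1 / (lam * t powr (\<nu>/2))"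
  have q0: "q > 0" using assms by (simp add: q_def)
  define Z where "Z = \<bar>x\<bar> / (lam * t powr (\<nu>/2))"
  have Zq: "Z = \<bar>x\<bar> * q" by (simp add: Z_def q_def)
  define a where "a = (\<lambda>k::nat. (- Z) ^ k / fact k * rGamma (- \<nu> * real k / 2 + 1 - \<nu>/2))"
  have rg: "1 - (real n + 1)/\<alpha> = - \<nu> * real n / 2 + 1 - \<nu>/2" for n
    using nu0 by (simp add: \<alpha>_def field_simps)
  have ia: "1/\<alpha> = \<nu>/2" by (simp add: \<alpha>_def)
  have u: "u_sol lam \<nu> x t = q / 2 * suminf a"
    unfolding u_sol_def a_def Z_def q_def by simp
  have K1: "(\<lambda>n. of_real ((1/\<alpha>) * ((-Z)^n / fact n) * 1 powr (- ((real n + 1)/\<alpha>)) * rGamma (1 - (real n + 1)/\<alpha>)))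
           sums stable_density \<alpha> Z (2 - \<alpha>) 1"
    by (rule stable_key[OF a1 a2]) simp
  have b1: "(1/\<alpha>) * ((-Z)^n / fact n) * 1 powr (- ((real n + 1)/\<alpha>)) * rGamma (1 - (real n + 1)/\<alpha>) = (\<nu>/2) * a n" for n
    unfolding rg ia by (simp add: a_def)
  have K1': "(\<lambda>n. complex_of_real ((\<nu>/2) * a n)) sums stable_density \<alpha> Z (2 - \<alpha>) 1"
    using K1 unfolding b1 .
  hence sa1: "summable (\<lambda>n. (\<nu>/2) * a n)"
    using summable_of_real_iff sums_summable by blast
  hence "summable (\<lambda>n. (2/\<nu>) * ((\<nu>/2) * a n))" by (rule summable_mult)
  hence sa: "summable a" using nu0 by simp
  have SD1: "stable_density \<alpha> Z (2 - \<alpha>) 1 = of_real ((\<nu>/2) * suminf a)"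
  proof -
    have "stable_density \<alpha> Z (2 - \<alpha>) 1 = (\<Sum>n. complex_of_real ((\<nu>/2) * a n))"
      using K1' by (simp add: sums_iff)
    also have "\<dots> = of_real (\<Sum>n. (\<nu>/2) * a n)" using sa1 by (rule suminf_of_real[symmetric])
    also have "(\<Sum>n. (\<nu>/2) * a n) = (\<nu>/2) * suminf a" using sa by (rule suminf_mult)
    finally show ?thesis .
  qed
  have K2: "(\<lambda>n. of_real ((1/\<alpha>) * ((-\<bar>x\<bar>)^n / fact n) * (lam powr \<alpha> * t) powr (- ((real n + 1)/\<alpha>)) * rGamma (1 - (real n + 1)/\<alpha>)))
           sums stable_density \<alpha> \<bar>x\<bar> (2 - \<alpha>) (lam powr \<alpha> * t)"
    using assms by (intro stable_key[OF a1 a2]) simp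
  have b2: "(1/\<alpha>) * ((-\<bar>x\<bar>)^n / fact n) * (lam powr \<alpha> * t) powr (- ((real n + 1)/\<alpha>)) * rGamma (1 - (real n + 1)/\<alpha>)
      = (\<nu>/2 * q) * a n" for n
  proof -
    have P: "(lam powr \<alpha> * t) powr (- ((real n + 1)/\<alpha>)) = q^(Suc n)"
      unfolding \<alpha>_def q_def using eta_pow[OF assms(1,4) nu0] by simp
    have "(-Z)^n = (-\<bar>x\<bar>)^n * q^n"
      unfolding Zq by (metis power_mult_distrib mult_minus_left)
    hence A: "(-\<bar>x\<bar>)^n * q^(Suc n) = q * (-Z)^n" by (simp add: mult_ac)
    show ?thesis unfolding P ia alg A rg a_def by (simp add: mult_ac)
  qed
  have K2': "(\<lambda>n. complex_of_real ((\<nu>/2 * q) * a n)) sums stable_density \<alpha> \<bar>x\<bar> (2 - \<alpha>) (lam powr \<alpha> * t)"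
    using K2 unfolding b2 .
  have sa2: "summable (\<lambda>n. (\<nu>/2 * q) * a n)" using sa by (rule summable_mult)
  have SD2: "stable_density \<alpha> \<bar>x\<bar> (2 - \<alpha>) (lam powr \<alpha> * t) = of_real ((\<nu>/2 * q) * suminf a)"
  proof -
    have "stable_density \<alpha> \<bar>x\<bar> (2 - \<alpha>) (lam powr \<alpha> * t) = (\<Sum>n. complex_of_real ((\<nu>/2 * q) * a n))"
      using K2' by (simp add: sums_iff)
    also have "\<dots> = of_real (\<Sum>n. (\<nu>/2 * q) * a n)" using sa2 by (rule suminf_of_real[symmetric])
    also have "(\<Sum>n. (\<nu>/2 * q) * a n) = (\<nu>/2 * q) * suminf a" using sa by (rule suminf_mult)
    finally show ?thesis .
  qed
  have eqa: "2/\<nu> = \<alpha>" by (simp add: \<alpha>_def)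
  have gam': "\<alpha> * (\<nu> - 1) = 2 - \<alpha>" using gam eqa by simp
  have SD1': "stable_density (2/\<nu>) (\<bar>x\<bar> / (lam * t powr (\<nu>/2))) (2/\<nu> * (\<nu> - 1)) 1 = of_real ((\<nu>/2) * suminf a)"
    using SD1 by (simp only: eqa gam' Z_def[symmetric])
  have SD2': "stable_density (2/\<nu>) \<bar>x\<bar> (2/\<nu> * (\<nu> - 1)) (lam powr (2/\<nu>) * t) = of_real ((\<nu>/2 * q) * suminf a)"
    using SD2 by (simp only: eqa gam')
  have r1: "2 / \<nu> * (1 / (2 * lam * t powr (\<nu>/2))) * ((\<nu>/2) * suminf a) = q / 2 * suminf a"
    using nu0 by (simp add: q_def)
  have r2: "1 / \<nu> * ((\<nu>/2 * q) * suminf a) = q / 2 * suminf a"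
    using nu0 by simp
  show ?thesis
  proof
    show "complex_of_real (u_sol lam \<nu> x t) =
           of_real (2 / \<nu>) * of_real (1 / (2 * lam * t powr (\<nu>/2))) *
           stable_density (2/\<nu>) (\<bar>x\<bar> / (lam * t powr (\<nu>/2))) (2/\<nu> * (\<nu> - 1)) 1"
      unfolding SD1' u r1[symmetric] by (simp only: of_real_mult)
  next
    show "complex_of_real (u_sol lam \<nu> x t) =
           of_real (1 / \<nu>) * stable_density (2/\<nu>) \<bar>x\<bar> (2/\<nu> * (\<nu> - 1)) (lam powr (2/\<nu>) * t)"
      unfolding SD2' u r2[symmetric] by (simp only: of_real_mult)
  qed
qed


end
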